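(* Let $N$ be an augmented network containing $G_{\mathrm{UN}}$. Suppose $\Gamma_1,\Gamma_2$ are distinct minimal edge-cuts of $N$, each consisting only of external Steiner edges. If there is a component $C$ of $G_{\mathrm{UN}}$ such that every edge in $\Gamma_1\cup\Gamma_2$ is incident to (has an endpoint in) $C$, then $\Gamma_1\cap\Gamma_2=\emptyset$.
   Context: All graphs are finite, simple and undirected. The vertex-connectivity $c(G)$ is the minimum number of vertices whose removal yields a disconnected or trivial graph, with $c(K_n)=n-1$ and the convention $c(K_1)=c(K_2)=2$; $G$ is $2$-connected if $c(G)\ge2$. An edge-cut of a graph $G$ is a set $E$ of edges such that $G-E$ has strictly more components than $G$; it is minimal if minimal by inclusion. Setting: $X$ is a set of terminals and $S$ a set of at most $k$ Steiner points; $\Delta=5$ or $7$ according as $1<p<\infty$ or $p\in\{1,\infty\}$. A Steiner edge is an edge incident to a Steiner point; it is external if its other endpoint is a terminal. $G_{\mathrm{UN}}$ is a fixed graph with vertex set $X\cup S$ containing no Steiner edges, with $b(G_{\mathrm{UN}})\le \Delta k$, where $b$ counts leaf blocks plus twice isolated blocks (blocks = maximal $2$-connected subgraphs, including isolated vertices; a leaf block contains exactly one cut-vertex, an isolated block none). An augmented network containing $G_{\mathrm{UN}}$ is a $2$-connected graph obtained from $G_{\mathrm{UN}}$ by adding Steiner edges. *)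

theory Defs
  imports Main
begin

definition simple_graph :: "'a set \<Rightarrow> 'a set set \<Rightarrow> bool" where
  "simple_graph V E \<longleftrightarrow> finite V \<and>
     (\<forall>e\<in>E. \<exists>u v. e = {u, v} \<and> u \<in> V \<and> v \<in> V \<and> u \<noteq> v)"

definition adj :: "'a set set \<Rightarrow> 'a \<Rightarrow> 'a \<Rightarrow> bool" where
  "adj E u v \<longleftrightarrow> {u, v} \<in> E"

definition components :: "'a set \<Rightarrow> 'a set set \<Rightarrow> 'a set set" where
  "components V E = {{v \<in> V. (adj E)\<^sup>*\<^sup>* u v} | u. u \<in> V}"

definition num_components :: "'a set \<Rightarrow> 'a set set \<Rightarrow> nat" where
  "num_components V E = card (components V E)"

definition connected_graph :: "'a set \<Rightarrow> 'a set set \<Rightarrow> bool" where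
  "connected_graph V E \<longleftrightarrow> (\<forall>u\<in>V. \<forall>v\<in>V. (adj E)\<^sup>*\<^sup>* u v)"

definition delete_vertices :: "'a set \<Rightarrow> 'a set set \<Rightarrow> 'a set \<Rightarrow> 'a set set" where
  "delete_vertices V E W = {e \<in> E. e \<inter> W = {}}"

definition complete_graph :: "'a set \<Rightarrow> 'a set set \<Rightarrow> bool" where
  "complete_graph V E \<longleftrightarrow> (\<forall>u\<in>V. \<forall>v\<in>V. u \<noteq> v \<longrightarrow> {u, v} \<in> E)"

definition vertex_connectivity :: "'a set \<Rightarrow> 'a set set \<Rightarrow> nat" where
  "vertex_connectivity V E =
     (if complete_graph V E then (if card V \<le> 2 then 2 else card V - 1)
      else Min {card W | W. W \<subseteq> V \<and>
              (\<not> connected_graph (V - W) (delete_vertices V E W) \<or> card (V - W) = 1)})"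

definition two_connected :: "'a set \<Rightarrow> 'a set set \<Rightarrow> bool" where
  "two_connected V E \<longleftrightarrow> vertex_connectivity V E \<ge> 2"

definition edge_cut :: "'a set \<Rightarrow> 'a set set \<Rightarrow> 'a set set \<Rightarrow> bool" where
  "edge_cut V E \<Gamma> \<longleftrightarrow> \<Gamma> \<subseteq> E \<and> num_components V (E - \<Gamma>) > num_components V E"

definition minimal_edge_cut :: "'a set \<Rightarrow> 'a set set \<Rightarrow> 'a set set \<Rightarrow> bool" where
  "minimal_edge_cut V E \<Gamma> \<longleftrightarrow> edge_cut V E \<Gamma> \<and> (\<forall>\<Gamma>'. \<Gamma>' \<subset> \<Gamma> \<longrightarrow> \<not> edge_cut V E \<Gamma>')"

text \<open>Steiner edges (incident to a Steiner point in S) and external Steiner edges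
(Steiner point joined to a terminal in X).\<close>
definition steiner_edge :: "'a set \<Rightarrow> 'a set \<Rightarrow> bool" where
  "steiner_edge S e \<longleftrightarrow> e \<inter> S \<noteq> {}"

definition external_steiner_edge :: "'a set \<Rightarrow> 'a set \<Rightarrow> 'a set \<Rightarrow> bool" where
  "external_steiner_edge X S e \<longleftrightarrow> (\<exists>s x. e = {s, x} \<and> s \<in> S \<and> x \<in> X)"

text \<open>N (edge set EN on X \<union> S) is an augmented network containing G_UN (edge set EUN).\<close>
definition augmented_network :: "'a set \<Rightarrow> 'a set \<Rightarrow> 'a set set \<Rightarrow> 'a set set \<Rightarrow> bool" where
  "augmented_network X S EUN EN \<longleftrightarrow>
     simple_graph (X \<union> S) EN \<and> EUN \<subseteq> EN \<and>
     (\<forall>e \<in> EN - EUN. steiner_edge S e) \<and> two_connected (X \<union> S) EN"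

end

theory Submission
  imports Defs
begin

abbreviation reach :: "'a set set \<Rightarrow> 'a \<Rightarrow> 'a \<Rightarrow> bool" where
  "reach E \<equiv> (adj E)\<^sup>*\<^sup>*"

lemma adj_sym: "adj E a b \<Longrightarrow> adj E b a"
  by (simp add: adj_def insert_commute)

lemma reach_sym: "reach E a b \<Longrightarrow> reach E b a"
proof (induction rule: rtranclp.induct)
  case (rtrancl_refl a) then show ?case by simp
next
  case (rtrancl_into_rtrancl a b c)
  then show ?case by (meson adj_sym converse_rtranclp_into_rtranclp)
qed

lemma reach_via: "reach E x p \<Longrightarrow> reach E x q \<Longrightarrow> reach E p q"
  by (meson reach_sym rtranclp_trans)

lemma reach_mono: assumes EF: "E \<subseteq> F" shows "reach E a b \<Longrightarrow> reach F a b"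
proof (induction rule: rtranclp.induct)
  case (rtrancl_refl a) then show ?case by simp
next
  case (rtrancl_into_rtrancl a b c)
  then show ?case using EF by (meson adj_def rtranclp.rtrancl_into_rtrancl subsetD)
qed

lemma closed_reach:
  assumes "\<And>p q. {p,q} \<in> E \<Longrightarrow> p \<in> U \<Longrightarrow> q \<in> U"
  shows "reach E a b \<Longrightarrow> a \<in> U \<Longrightarrow> b \<in> U"
proof (induction rule: rtranclp.induct)
  case (rtrancl_refl a) then show ?case by simp
next
  case (rtrancl_into_rtrancl a b c)
  then show ?case using assms adj_def by metis
qed

lemma comps_image: "components V E = (\<lambda>u. {v \<in> V. reach E u v}) ` V"
  unfolding components_def by auto

lemma edge_form:
  assumes "simple_graph V E" "f \<in> E"
  shows "\<exists>u v. f = {u, v} \<and> u \<in> V \<and> v \<in> V \<and> u \<noteq> v"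
proof -
  have "\<forall>e\<in>E. \<exists>u v. e = {u, v} \<and> u \<in> V \<and> v \<in> V \<and> u \<noteq> v"
    using assms(1) unfolding simple_graph_def by (rule conjunct2)
  then show ?thesis using assms(2) by (rule bspec)
qed

lemma edge_in_V:
  assumes "simple_graph V E" "{u,v} \<in> E" shows "u \<in> V" "v \<in> V"
proof -
  obtain a b where "{u,v} = {a,b}" "a \<in> V" "b \<in> V"
    using edge_form[OF assms] by (elim exE conjE) blast
  then show "u \<in> V" "v \<in> V" by (auto simp: doubleton_eq_iff)
qed

lemma cut_if:
  assumes sg: "simple_graph V E" and sub: "\<Gamma> \<subseteq> E" and uv: "{u,v} \<in> \<Gamma>"
    and nr: "\<not> reach (E - \<Gamma>) u v"
  shows "edge_cut V E \<Gamma>"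
proof -
  have fin: "finite V" using sg simple_graph_def by blast
  have uvV: "u \<in> V" "v \<in> V"
    using edge_in_V[OF sg] uv sub by blast+
  define f' where "f' = (\<lambda>u. {v \<in> V. reach (E - \<Gamma>) u v})"
  define f where "f = (\<lambda>u. {v \<in> V. reach E u v})"
  have wd: "f a = f b" if "a \<in> V" "b \<in> V" "f' a = f' b" for a b
  proof -
    have "b \<in> f' a" using that unfolding f'_def by auto
    then have "reach E a b" unfolding f'_def using reach_mono[of "E - \<Gamma>" E] by auto
    then show ?thesis unfolding f_def
      by (auto intro: rtranclp_trans reach_sym)
  qed
  define g where "g = (\<lambda>K. f (SOME w. w \<in> V \<and> f' w = K))"
  have gf: "g (f' a) = f a" if "a \<in> V" for a
  proof -
    have "\<exists>w. w \<in> V \<and> f' w = f' a" using that by blast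
    then have "(SOME w. w \<in> V \<and> f' w = f' a) \<in> V \<and> f' (SOME w. w \<in> V \<and> f' w = f' a) = f' a"
      by (rule someI_ex)
    then show ?thesis unfolding g_def using wd that by metis
  qed
  have img: "f ` V = g ` (f' ` V)" using gf by (auto simp: image_image)
  have ne: "f' u \<noteq> f' v"
  proof
    assume "f' u = f' v"
    then have "v \<in> f' u" using uvV unfolding f'_def by auto
    then show False using nr unfolding f'_def by auto
  qed
  have geq: "g (f' u) = g (f' v)"
  proof -
    have "adj E u v" using uv sub by (auto simp: adj_def)
    then have "reach E u v" by blast
    then have "f u = f v" unfolding f_def by (auto intro: rtranclp_trans reach_sym)
    then show ?thesis using gf uvV by simp
  qed
  have "\<not> inj_on g (f' ` V)" using ne geq uvV unfolding inj_on_def by blast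
  then have "card (g ` (f' ` V)) \<noteq> card (f' ` V)" using inj_on_iff_eq_card fin by blast
  moreover have "card (g ` (f' ` V)) \<le> card (f' ` V)" using card_image_le fin by blast
  ultimately have "card (f ` V) < card (f' ` V)" using img by simp
  then show ?thesis unfolding edge_cut_def num_components_def comps_image f_def f'_def
    using sub by simp
qed

lemma cut_only_if:
  assumes cut: "edge_cut V E \<Gamma>"
  shows "\<exists>u v. {u,v} \<in> \<Gamma> \<and> \<not> reach (E - \<Gamma>) u v"
proof (rule ccontr)
  assume "\<not> ?thesis"
  then have all: "reach (E - \<Gamma>) u v" if "{u,v} \<in> \<Gamma>" for u v using that by blast
  have "reach E a b = reach (E - \<Gamma>) a b" for a b
  proof
    assume "reach E a b"
    then show "reach (E - \<Gamma>) a b"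
    proof (induction rule: rtranclp.induct)
      case (rtrancl_refl a) then show ?case by simp
    next
      case (rtrancl_into_rtrancl a b c)
      show ?case
      proof (cases "{b,c} \<in> \<Gamma>")
        case True
        then have "reach (E - \<Gamma>) b c" by (rule all)
        then show ?thesis by (rule rtranclp_trans[OF rtrancl_into_rtrancl(3)])
      next
        case False
        then have "adj (E - \<Gamma>) b c" using rtrancl_into_rtrancl(2) by (auto simp: adj_def)
        then show ?thesis by (rule rtranclp.rtrancl_into_rtrancl[OF rtrancl_into_rtrancl(3)])
      qed
    qed
  next
    assume "reach (E - \<Gamma>) a b" then show "reach E a b" by (rule reach_mono[OF Diff_subset])
  qed
  then have eqr: "reach E = reach (E - \<Gamma>)" by (intro ext)
  have "components V (E - \<Gamma>) = components V E" unfolding comps_image eqr by (rule refl)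
  then show False using cut unfolding edge_cut_def num_components_def by simp
qed

lemma min_cut_edges:
  assumes sg: "simple_graph V E" and mc: "minimal_edge_cut V E \<Gamma>" and ab: "{a,b} \<in> \<Gamma>"
  shows "\<not> reach (E - \<Gamma>) a b"
proof -
  have cut: "edge_cut V E \<Gamma>" and sub: "\<Gamma> \<subseteq> E"
    using mc unfolding minimal_edge_cut_def edge_cut_def by auto
  obtain u v where uv: "{u,v} \<in> \<Gamma>" "\<not> reach (E - \<Gamma>) u v" using cut_only_if[OF cut] by blast
  define R where "R = {w. reach (E - \<Gamma>) u w}"
  define \<Gamma>'' where "\<Gamma>'' = {f \<in> \<Gamma>. f \<inter> R \<noteq> {} \<and> f - R \<noteq> {}}"
  have uR: "u \<in> R" and vR: "v \<notin> R" using uv unfolding R_def by auto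
  have "{u,v} \<in> \<Gamma>''" using uv uR vR unfolding \<Gamma>''_def by auto
  moreover have "\<not> reach (E - \<Gamma>'') u v"
  proof
    assume "reach (E - \<Gamma>'') u v"
    moreover have "q \<in> R" if "{p,q} \<in> E - \<Gamma>''" "p \<in> R" for p q
    proof (cases "{p,q} \<in> \<Gamma>")
      case True
      then show ?thesis using that unfolding \<Gamma>''_def by auto
    next
      case False
      then have "adj (E - \<Gamma>) p q" using that by (auto simp: adj_def)
      then show ?thesis using that(2) unfolding R_def by auto
    qed
    ultimately have "v \<in> R" using closed_reach[of "E - \<Gamma>''" R] uR by blast
    then show False using vR by simp
  qed
  moreover have "\<Gamma>'' \<subseteq> E" using sub unfolding \<Gamma>''_def by auto
  ultimately have "edge_cut V E \<Gamma>''" using cut_if[OF sg] by blast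
  moreover have "\<Gamma>'' \<subseteq> \<Gamma>" unfolding \<Gamma>''_def by auto
  ultimately have "\<Gamma>'' = \<Gamma>" using mc unfolding minimal_edge_cut_def by blast
  then have "{a,b} \<in> \<Gamma>''" using ab by simp
  then have "(a \<in> R \<and> b \<notin> R) \<or> (b \<in> R \<and> a \<notin> R)" unfolding \<Gamma>''_def by auto
  then show ?thesis
  proof
    assume "a \<in> R \<and> b \<notin> R"
    then show ?thesis unfolding R_def by (auto intro: rtranclp_trans)
  next
    assume "b \<in> R \<and> a \<notin> R"
    then show ?thesis unfolding R_def by (auto intro: rtranclp_trans reach_sym)
  qed
qed

theorem lemma7:
  fixes X S :: "'a set" and EUN EN \<Gamma>1 \<Gamma>2 :: "'a set set" and C :: "'a set"
  assumes "finite X" and "finite S" and "X \<inter> S = {}"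
    and "simple_graph (X \<union> S) EUN"
    and "\<forall>e\<in>EUN. \<not> steiner_edge S e"
    and "augmented_network X S EUN EN"
    and "minimal_edge_cut (X \<union> S) EN \<Gamma>1" and "minimal_edge_cut (X \<union> S) EN \<Gamma>2"
    and "\<Gamma>1 \<noteq> \<Gamma>2"
    and "\<forall>e\<in>\<Gamma>1 \<union> \<Gamma>2. external_steiner_edge X S e"
    and "C \<in> components (X \<union> S) EUN"
    and "\<forall>e\<in>\<Gamma>1 \<union> \<Gamma>2. e \<inter> C \<noteq> {}"
  shows "\<Gamma>1 \<inter> \<Gamma>2 = {}"
proof (rule ccontr)
  assume "\<Gamma>1 \<inter> \<Gamma>2 \<noteq> {}"
  then obtain e where e1: "e \<in> \<Gamma>1" and e2: "e \<in> \<Gamma>2" by blast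
  let ?V = "X \<union> S"
  have sg: "simple_graph ?V EN" and unsub: "EUN \<subseteq> EN"
    using assms(6) unfolding augmented_network_def by auto
  have sub1: "\<Gamma>1 \<subseteq> EN" and sub2: "\<Gamma>2 \<subseteq> EN"
    using assms(7,8) unfolding minimal_edge_cut_def edge_cut_def by auto
  obtain u0 where u0: "u0 \<in> ?V" and Cdef: "C = {v \<in> ?V. reach EUN u0 v}"
    using assms(11) unfolding components_def by blast
  have stG: "steiner_edge S f" if "f \<in> \<Gamma>1 \<union> \<Gamma>2" for f
    using assms(10) that unfolding external_steiner_edge_def steiner_edge_def by blast
  have dis1: "EUN \<subseteq> EN - \<Gamma>1" and dis2: "EUN \<subseteq> EN - \<Gamma>2"
    using unsub stG assms(5) by blast+
  define A1 where "A1 = {w. reach (EN - \<Gamma>1) u0 w}"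
  define A2 where "A2 = {w. reach (EN - \<Gamma>2) u0 w}"
  have CA1: "C \<subseteq> A1" using Cdef reach_mono[OF dis1] unfolding A1_def by blast
  have CA2: "C \<subseteq> A2" using Cdef reach_mono[OF dis2] unfolding A2_def by blast
  have edge1: "\<exists>a b. f = {a,b} \<and> a \<in> C \<and> b \<notin> A1" if "f \<in> \<Gamma>1" for f
  proof -
    have fEN: "f \<in> EN" using sub1 that by (rule subsetD)
    obtain p q where pq: "f = {p,q}" using edge_form[OF sg fEN] by (elim exE conjE) blast
    have nr: "\<not> reach (EN - \<Gamma>1) p q" using min_cut_edges[OF sg assms(7)] that pq by blast
    have "f \<in> \<Gamma>1 \<union> \<Gamma>2" using that by simp
    then have "f \<inter> C \<noteq> {}" by (rule bspec[OF assms(12)])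
    then have "p \<in> C \<or> q \<in> C" using pq by auto
    then show ?thesis
    proof
      assume pC: "p \<in> C"
      have "q \<notin> A1"
      proof
        assume "q \<in> A1"
        moreover have "p \<in> A1" using pC CA1 by blast
        ultimately have "reach (EN - \<Gamma>1) p q" using reach_via[of "EN - \<Gamma>1" u0 p q] unfolding A1_def by simp
        then show False using nr by blast
      qed
      then show ?thesis using pq pC by blast
    next
      assume qC: "q \<in> C"
      have "p \<notin> A1"
      proof
        assume "p \<in> A1"
        moreover have "q \<in> A1" using qC CA1 by blast
        ultimately have "reach (EN - \<Gamma>1) p q" using reach_via[of "EN - \<Gamma>1" u0 p q] unfolding A1_def by simp
        then show False using nr by blast
      qed
      moreover have "f = {q,p}" using pq by (simp add: insert_commute)
      ultimately show ?thesis using qC by blast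
    qed
  qed
  have edge2: "\<exists>a b. f = {a,b} \<and> a \<in> C \<and> b \<notin> A2" if "f \<in> \<Gamma>2" for f
  proof -
    have fEN: "f \<in> EN" using sub2 that by (rule subsetD)
    obtain p q where pq: "f = {p,q}" using edge_form[OF sg fEN] by (elim exE conjE) blast
    have nr: "\<not> reach (EN - \<Gamma>2) p q" using min_cut_edges[OF sg assms(8)] that pq by blast
    have "f \<in> \<Gamma>1 \<union> \<Gamma>2" using that by simp
    then have "f \<inter> C \<noteq> {}" by (rule bspec[OF assms(12)])
    then have "p \<in> C \<or> q \<in> C" using pq by auto
    then show ?thesis
    proof
      assume pC: "p \<in> C"
      have "q \<notin> A2"
      proof
        assume "q \<in> A2"
        moreover have "p \<in> A2" using pC CA2 by blast
        ultimately have "reach (EN - \<Gamma>2) p q" using reach_via[of "EN - \<Gamma>2" u0 p q] unfolding A2_def by simp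
        then show False using nr by blast
      qed
      then show ?thesis using pq pC by blast
    next
      assume qC: "q \<in> C"
      have "p \<notin> A2"
      proof
        assume "p \<in> A2"
        moreover have "q \<in> A2" using qC CA2 by blast
        ultimately have "reach (EN - \<Gamma>2) p q" using reach_via[of "EN - \<Gamma>2" u0 p q] unfolding A2_def by simp
        then show False using nr by blast
      qed
      moreover have "f = {q,p}" using pq by (simp add: insert_commute)
      ultimately show ?thesis using qC by blast
    qed
  qed
  have cl1: "{p,q} \<in> \<Gamma>1" if "{p,q} \<in> EN" "p \<in> A1" "q \<notin> A1" for p q
  proof (rule ccontr)
    assume "{p,q} \<notin> \<Gamma>1"
    then have "adj (EN - \<Gamma>1) p q" using that by (auto simp: adj_def)
    moreover have "reach (EN - \<Gamma>1) u0 p" using that(2) unfolding A1_def by simp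
    ultimately have "reach (EN - \<Gamma>1) u0 q" by (simp add: rtranclp.rtrancl_into_rtrancl)
    then show False using that(3) unfolding A1_def by simp
  qed
  have cl2: "{p,q} \<in> \<Gamma>2" if "{p,q} \<in> EN" "p \<in> A2" "q \<notin> A2" for p q
  proof (rule ccontr)
    assume "{p,q} \<notin> \<Gamma>2"
    then have "adj (EN - \<Gamma>2) p q" using that by (auto simp: adj_def)
    moreover have "reach (EN - \<Gamma>2) u0 p" using that(2) unfolding A2_def by simp
    ultimately have "reach (EN - \<Gamma>2) u0 q" by (simp add: rtranclp.rtrancl_into_rtrancl)
    then show False using that(3) unfolding A2_def by simp
  qed
  define U where "U = A1 \<union> A2"
  define G' where "G' = {f \<in> EN. f \<inter> U \<noteq> {} \<and> f - U \<noteq> {}}"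
  have oriented: "\<exists>p q. f = {p,q} \<and> p \<in> U \<and> q \<notin> U" if "f \<in> G'" for f
  proof -
    have fEN: "f \<in> EN" using that unfolding G'_def by blast
    obtain p q where pq: "f = {p,q}" using edge_form[OF sg fEN] by (elim exE conjE) blast
    have i: "f \<inter> U \<noteq> {}" and o: "f - U \<noteq> {}" using that unfolding G'_def by blast+
    show ?thesis
    proof (cases "p \<in> U")
      case True
      then have "q \<notin> U" using o pq by blast
      then show ?thesis using True pq by blast
    next
      case False
      then have "q \<in> U" using i pq by blast
      moreover have "f = {q,p}" using pq by (simp add: insert_commute)
      ultimately show ?thesis using False by blast
    qed
  qed
  have G'1: "G' \<subseteq> \<Gamma>1"
  proof
    fix f assume f: "f \<in> G'"
    obtain p q where pq: "f = {p,q}" "p \<in> U" "q \<notin> U" using oriented[OF f] by blast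
    have fE: "f \<in> EN" using f unfolding G'_def by auto
    show "f \<in> \<Gamma>1"
    proof (cases "p \<in> A1")
      case True then show ?thesis using cl1 fE pq unfolding U_def by blast
    next
      case False
      then have "p \<in> A2" "q \<notin> A2" using pq unfolding U_def by auto
      then have "f \<in> \<Gamma>2" using cl2 fE pq by blast
      then obtain a b where ab: "f = {a,b}" "a \<in> C" using edge2 by blast
      then have aA: "a \<in> A1" using CA1 by blast
      have "a \<in> {p,q}" using ab pq(1) by blast
      then show ?thesis using aA False pq(3) unfolding U_def by blast
    qed
  qed
  have G'2: "G' \<subseteq> \<Gamma>2"
  proof
    fix f assume f: "f \<in> G'"
    obtain p q where pq: "f = {p,q}" "p \<in> U" "q \<notin> U" using oriented[OF f] by blast
    have fE: "f \<in> EN" using f unfolding G'_def by auto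
    show "f \<in> \<Gamma>2"
    proof (cases "p \<in> A2")
      case True then show ?thesis using cl2 fE pq unfolding U_def by blast
    next
      case False
      then have "p \<in> A1" "q \<notin> A1" using pq unfolding U_def by auto
      then have "f \<in> \<Gamma>1" using cl1 fE pq by blast
      then obtain a b where ab: "f = {a,b}" "a \<in> C" using edge1 by blast
      then have aA: "a \<in> A2" using CA2 by blast
      have "a \<in> {p,q}" using ab pq(1) by blast
      then show ?thesis using aA False pq(3) unfolding U_def by blast
    qed
  qed
  obtain a b where ab: "e = {a,b}" "a \<in> C" "b \<notin> A1" using edge1[OF e1] by blast
  obtain a' b' where ab': "e = {a',b'}" "a' \<in> C" "b' \<notin> A2" using edge2[OF e2] by blast
  have "b \<notin> A2"
  proof
    assume bA: "b \<in> A2"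
    have "b' \<in> {a,b}" using ab(1) ab'(1) by blast
    moreover have "a \<in> A2" using ab(2) CA2 by blast
    ultimately have "b' \<in> A2" using bA by blast
    then show False using ab'(3) by blast
  qed
  then have bU: "b \<notin> U" and aU: "a \<in> U" using ab CA1 unfolding U_def by auto
  have eG: "{a,b} \<in> G'" using e1 sub1 ab aU bU unfolding G'_def by auto
  have "\<not> reach (EN - G') a b"
  proof
    assume "reach (EN - G') a b"
    moreover have "q \<in> U" if "{p,q} \<in> EN - G'" "p \<in> U" for p q
      using that unfolding G'_def by auto
    ultimately have "b \<in> U" using closed_reach[of "EN - G'" U] aU by blast
    then show False using bU by simp
  qed
  moreover have "G' \<subseteq> EN" unfolding G'_def by auto
  ultimately have cutG: "edge_cut ?V EN G'" using cut_if[OF sg _ eG] by blast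
  have "G' = \<Gamma>1" using cutG G'1 assms(7) unfolding minimal_edge_cut_def by blast
  moreover have "G' = \<Gamma>2" using cutG G'2 assms(8) unfolding minimal_edge_cut_def by blast
  ultimately show False using assms(9) by simp
qed

end
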